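(* For all unit types $U,U'$ and all scalars $\alpha,\beta\in\mathcal S$: if $\alpha.U\equiv\beta.U'$ then $\alpha=\beta$, and if moreover $\alpha\neq0$ then $U\equiv U'$.
   Context: Fix a commutative ring $(\mathcal S,+,\times)$. Types: $T ::= U \mid \forall X.T \mid \alpha.T \mid \overline0$; unit types: $U ::= X \mid U\to T \mid \forall X.U$ ($\alpha\in\mathcal S$, $X$ type variables). Type equivalence $\equiv$ is the least congruence on types with $\alpha.\overline0\equiv\overline0$, $0.T\equiv\overline0$, $1.T\equiv T$, $\alpha.(\beta.T)\equiv(\alpha\times\beta).T$, $\forall X.\alpha.T\equiv\alpha.\forall X.T$. *)

theory Defs
  imports Main
begin

text \<open>Types over a scalar type 'a (a commutative ring), with type variables and
  binders represented by de Bruijn indices (so alpha-equivalent types are equal).\<close>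

datatype 'a ty = TVar nat | Arr "'a ty" "'a ty" | All "'a ty" | Scal 'a "'a ty" | Zero

fun is_unit :: "'a ty \<Rightarrow> bool" and is_type :: "'a ty \<Rightarrow> bool" where
  "is_unit (TVar n) = True"
| "is_unit (Arr A B) = (is_unit A \<and> is_type B)"
| "is_unit (All A) = is_unit A"
| "is_unit (Scal a A) = False"
| "is_unit Zero = False"
| "is_type (TVar n) = True"
| "is_type (Arr A B) = (is_unit A \<and> is_type B)"
| "is_type (All A) = is_type A"
| "is_type (Scal a A) = is_type A"
| "is_type Zero = True"

inductive ty_equiv :: "('a::comm_ring_1) ty \<Rightarrow> 'a ty \<Rightarrow> bool" (infix "\<equiv>\<^sub>T" 50) where
  eq_refl: "is_type T \<Longrightarrow> T \<equiv>\<^sub>T T"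
| eq_sym: "T \<equiv>\<^sub>T R \<Longrightarrow> R \<equiv>\<^sub>T T"
| eq_trans: "T \<equiv>\<^sub>T R \<Longrightarrow> R \<equiv>\<^sub>T V \<Longrightarrow> T \<equiv>\<^sub>T V"
| ax_scal_zero: "Scal a Zero \<equiv>\<^sub>T Zero"
| ax_zero_scal: "is_type T \<Longrightarrow> Scal 0 T \<equiv>\<^sub>T Zero"
| ax_one: "is_type T \<Longrightarrow> Scal 1 T \<equiv>\<^sub>T T"
| ax_mult: "is_type T \<Longrightarrow> Scal a (Scal b T) \<equiv>\<^sub>T Scal (a * b) T"
| ax_all_scal: "is_type T \<Longrightarrow> All (Scal a T) \<equiv>\<^sub>T Scal a (All T)"
| cong_arr: "U \<equiv>\<^sub>T U' \<Longrightarrow> is_unit U \<Longrightarrow> is_unit U' \<Longrightarrow> T \<equiv>\<^sub>T T' \<Longrightarrow> Arr U T \<equiv>\<^sub>T Arr U' T'"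
| cong_all: "T \<equiv>\<^sub>T T' \<Longrightarrow> All T \<equiv>\<^sub>T All T'"
| cong_scal: "T \<equiv>\<^sub>T T' \<Longrightarrow> Scal a T \<equiv>\<^sub>T Scal a T'"

end

theory Submission
  imports Defs
begin

definition mk :: "'a::comm_ring_1 \<Rightarrow> 'a ty \<Rightarrow> ('a \<times> 'a ty) option" where
  "mk a V = (if a = 0 then None else Some (a, V))"

definition reify :: "('a \<times> 'a ty) option \<Rightarrow> 'a ty" where
  "reify x = (case x of None \<Rightarrow> Zero | Some (a, V) \<Rightarrow> Scal a V)"

definition cu :: "('a \<times> 'a ty) option \<Rightarrow> 'a ty" where
  "cu x = (case x of None \<Rightarrow> Zero | Some (a, V) \<Rightarrow> V)"

fun nrm :: "('a::comm_ring_1) ty \<Rightarrow> ('a \<times> 'a ty) option" where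
  "nrm (TVar n) = mk 1 (TVar n)"
| "nrm (Arr A B) = mk 1 (Arr (cu (nrm A)) (reify (nrm B)))"
| "nrm (All A) = (case nrm A of None \<Rightarrow> None | Some (a, V) \<Rightarrow> Some (a, All V))"
| "nrm (Scal a A) = (case nrm A of None \<Rightarrow> None | Some (b, V) \<Rightarrow> mk (a * b) V)"
| "nrm Zero = None"

lemma nrm_nz: "nrm T = Some (b, V) \<Longrightarrow> b \<noteq> 0"
  by (induction T arbitrary: b V) (auto simp: mk_def split: option.splits if_splits)

lemma nrm_inv: "T \<equiv>\<^sub>T T' \<Longrightarrow> nrm T = nrm T'"
proof (induction rule: ty_equiv.induct)
  case (ax_one T)
  then show ?case by (auto simp: mk_def split: option.splits dest: nrm_nz)
next
  case (ax_mult T a b)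
  then show ?case by (auto simp: mk_def mult.assoc split: option.splits)
qed (auto simp: mk_def split: option.splits)

lemma unit_type: "is_unit T \<Longrightarrow> is_type T"
  by (induction T) auto

lemmas [trans] = eq_trans

lemma all_zero: "All Zero \<equiv>\<^sub>T (Zero :: ('a::comm_ring_1) ty)"
proof -
  have z: "is_type (Zero :: 'a ty)" by simp
  have "All Zero \<equiv>\<^sub>T All (Scal (0::'a) Zero)"
    by (rule cong_all, rule eq_sym, rule ax_zero_scal[OF z])
  also have "All (Scal (0::'a) Zero) \<equiv>\<^sub>T Scal 0 (All Zero)" by (rule ax_all_scal) simp
  also have "Scal (0::'a) (All Zero) \<equiv>\<^sub>T Zero" by (rule ax_zero_scal) simp
  finally show ?thesis .
qed

lemma complete:
  assumes nt: "(1::'a::comm_ring_1) \<noteq> 0"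
  shows "(is_type (T::'a ty) \<longrightarrow> (case nrm T of None \<Rightarrow> T \<equiv>\<^sub>T Zero
            | Some (a, V) \<Rightarrow> is_unit V \<and> T \<equiv>\<^sub>T Scal a V))
       \<and> (is_unit T \<longrightarrow> (\<exists>V. nrm T = Some (1, V) \<and> is_unit V \<and> T \<equiv>\<^sub>T V))"
proof (induction T)
  case (TVar n)
  have "TVar n \<equiv>\<^sub>T Scal 1 (TVar n :: 'a ty)" by (rule eq_sym, rule ax_one) simp
  then show ?case using nt by (auto simp: mk_def intro: eq_refl)
next
  case (Arr A B)
  show ?case
  proof (intro conjI impI)
    assume u: "is_unit (Arr A B)"
    then have uA: "is_unit A" and tB: "is_type B" by auto
    from Arr.IH(1) uA obtain V where V: "nrm A = Some (1, V)" "is_unit V" "A \<equiv>\<^sub>T V" by blast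
    have tR: "is_type (reify (nrm B))" and eB: "B \<equiv>\<^sub>T reify (nrm B)"
      using Arr.IH(2) tB by (auto simp: reify_def split: option.splits intro: unit_type)
    have e: "Arr A B \<equiv>\<^sub>T Arr V (reify (nrm B))"
      by (rule cong_arr) (use V uA eB in auto)
    have uu: "is_unit (Arr V (reify (nrm B)))" using V tR by simp
    show "\<exists>W. nrm (Arr A B) = Some (1, W) \<and> is_unit W \<and> Arr A B \<equiv>\<^sub>T W"
      using e uu V nt by (auto simp: mk_def cu_def)
  next
    assume "is_type (Arr A B)"
    then have u: "is_unit (Arr A B)" by simp
    from Arr.IH(1) u obtain V where V: "nrm A = Some (1, V)" "is_unit V" "A \<equiv>\<^sub>T V" by auto
    have tB: "is_type B" using u by simp
    have tR: "is_type (reify (nrm B))" and eB: "B \<equiv>\<^sub>T reify (nrm B)"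
      using Arr.IH(2) tB by (auto simp: reify_def split: option.splits intro: unit_type)
    have e: "Arr A B \<equiv>\<^sub>T Arr V (reify (nrm B))"
      by (rule cong_arr) (use V u eB in auto)
    have uu: "is_unit (Arr V (reify (nrm B)))" using V tR by simp
    have "Arr A B \<equiv>\<^sub>T Scal 1 (Arr V (reify (nrm B)))"
      using e uu unit_type by (blast intro: eq_trans eq_sym ax_one)
    then show "case nrm (Arr A B) of None \<Rightarrow> Arr A B \<equiv>\<^sub>T Zero
            | Some (a, V) \<Rightarrow> is_unit V \<and> Arr A B \<equiv>\<^sub>T Scal a V"
      using uu V nt by (auto simp: mk_def cu_def)
  qed
next
  case (All A)
  show ?case
  proof (intro conjI impI)
    assume t: "is_type (All A)"
    then have tA: "is_type A" by simp
    show "case nrm (All A) of None \<Rightarrow> All A \<equiv>\<^sub>T Zero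
            | Some (a, V) \<Rightarrow> is_unit V \<and> All A \<equiv>\<^sub>T Scal a V"
    proof (cases "nrm A")
      case None
      then have "A \<equiv>\<^sub>T Zero" using All.IH tA by auto
      then have "All A \<equiv>\<^sub>T All Zero" by (rule cong_all)
      then show ?thesis using None all_zero by (auto intro: eq_trans)
    next
      case (Some p)
      then obtain a V where p: "nrm A = Some (a, V)" by (cases p) auto
      then have V: "is_unit V" "A \<equiv>\<^sub>T Scal a V" using All.IH tA by auto
      have "All A \<equiv>\<^sub>T All (Scal a V)" by (rule cong_all[OF V(2)])
      also have "All (Scal a V) \<equiv>\<^sub>T Scal a (All V)" by (rule ax_all_scal) (use V unit_type in auto)
      finally show ?thesis using p V by simp
    qed
  next
    assume u: "is_unit (All A)"
    then have uA: "is_unit A" by simp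
    from All.IH uA obtain V where V: "nrm A = Some (1, V)" "is_unit V" "A \<equiv>\<^sub>T V" by blast
    then show "\<exists>W. nrm (All A) = Some (1, W) \<and> is_unit W \<and> All A \<equiv>\<^sub>T W"
      by (auto intro: cong_all)
  qed
next
  case (Scal a A)
  show ?case
  proof (intro conjI impI)
    assume t: "is_type (Scal a A)"
    then have tA: "is_type A" by simp
    show "case nrm (Scal a A) of None \<Rightarrow> Scal a A \<equiv>\<^sub>T Zero
            | Some (a', V) \<Rightarrow> is_unit V \<and> Scal a A \<equiv>\<^sub>T Scal a' V"
    proof (cases "nrm A")
      case None
      then have "A \<equiv>\<^sub>T Zero" using Scal.IH tA by auto
      then have "Scal a A \<equiv>\<^sub>T Scal a Zero" by (rule cong_scal)
      then show ?thesis using None by (auto intro: eq_trans ax_scal_zero)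
    next
      case (Some p)
      then obtain b V where p: "nrm A = Some (b, V)" by (cases p) auto
      then have V: "is_unit V" "A \<equiv>\<^sub>T Scal b V" using Scal.IH tA by auto
      have "Scal a A \<equiv>\<^sub>T Scal a (Scal b V)" by (rule cong_scal[OF V(2)])
      also have "Scal a (Scal b V) \<equiv>\<^sub>T Scal (a*b) V" by (rule ax_mult) (use V unit_type in auto)
      finally have e: "Scal a A \<equiv>\<^sub>T Scal (a*b) V" .
      show ?thesis
      proof (cases "a * b = 0")
        case True
        have "Scal (a*b) V \<equiv>\<^sub>T Zero" unfolding True by (rule ax_zero_scal) (use V unit_type in auto)
        with e True p show ?thesis by (auto simp: mk_def intro: eq_trans)
      qed (use e p V in \<open>auto simp: mk_def\<close>)
    qed
  qed simp
next
  case Zero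
  then show ?case by (auto intro: eq_refl)
qed

lemma trivial_eq: "(1::'a::comm_ring_1) = 0 \<Longrightarrow> (x::'a) = y"
  by (metis mult_1 mult_zero_left)

theorem mainTheorem18:
  fixes U U' :: "('a::comm_ring_1) ty" and \<alpha> \<beta> :: 'a
  assumes "is_unit U" and "is_unit U'" and "Scal \<alpha> U \<equiv>\<^sub>T Scal \<beta> U'"
  shows "\<alpha> = \<beta> \<and> (\<alpha> \<noteq> 0 \<longrightarrow> U \<equiv>\<^sub>T U')"
proof (cases "(1::'a) = 0")
  case True
  then show ?thesis using trivial_eq by blast
next
  case False
  from complete[OF False, of U] assms(1) obtain V where V: "nrm U = Some (1, V)" "U \<equiv>\<^sub>T V" by blast
  from complete[OF False, of U'] assms(2) obtain V' where V': "nrm U' = Some (1, V')" "U' \<equiv>\<^sub>T V'" by blast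
  have e: "nrm (Scal \<alpha> U) = nrm (Scal \<beta> U')" by (rule nrm_inv[OF assms(3)])
  show ?thesis
  proof (cases "\<alpha> = 0")
    case True
    then show ?thesis using e V V' by (auto simp: mk_def split: if_splits)
  next
    case F: False
    then have "\<beta> \<noteq> 0 \<and> \<alpha> = \<beta> \<and> V = V'" using e V V' by (auto simp: mk_def split: if_splits)
    then show ?thesis using V V' by (blast intro: eq_trans eq_sym)
  qed
qed

end
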